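(* A connected bipartite graph $H$ is equimatchable if and only if $V(H)$ admits a bipartition into two independent sets $U$ and $W$ such that every vertex of $U$ is strong in $H$.
   Context: A graph is equimatchable if all its maximal (inclusion-wise) matchings have the same size. A vertex $v$ of a graph $H$ is strong if every maximal matching of $H$ covers $v$. *)

theory Defs
  imports Main
begin

definition graph :: "'a set \<Rightarrow> 'a set set \<Rightarrow> bool" where
  "graph V E \<longleftrightarrow> finite V \<and> (\<forall>e\<in>E. \<exists>u v. e = {u, v} \<and> u \<noteq> v \<and> u \<in> V \<and> v \<in> V)"

definition adj :: "'a set set \<Rightarrow> 'a \<Rightarrow> 'a \<Rightarrow> bool" where
  "adj E u v \<longleftrightarrow> {u, v} \<in> E"

definition connected_graph :: "'a set \<Rightarrow> 'a set set \<Rightarrow> bool" where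
  "connected_graph V E \<longleftrightarrow> (\<forall>u\<in>V. \<forall>v\<in>V. (adj E)\<^sup>*\<^sup>* u v)"

definition independent_set :: "'a set set \<Rightarrow> 'a set \<Rightarrow> bool" where
  "independent_set E S \<longleftrightarrow> (\<forall>u\<in>S. \<forall>v\<in>S. \<not> adj E u v)"

definition independent_bipartition :: "'a set \<Rightarrow> 'a set set \<Rightarrow> 'a set \<Rightarrow> 'a set \<Rightarrow> bool" where
  "independent_bipartition V E U W \<longleftrightarrow>
     U \<union> W = V \<and> U \<inter> W = {} \<and> independent_set E U \<and> independent_set E W"

definition bipartite :: "'a set \<Rightarrow> 'a set set \<Rightarrow> bool" where
  "bipartite V E \<longleftrightarrow> (\<exists>U W. independent_bipartition V E U W)"

definition matching :: "'a set set \<Rightarrow> 'a set set \<Rightarrow> bool" where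
  "matching E M \<longleftrightarrow> M \<subseteq> E \<and> (\<forall>e\<in>M. \<forall>f\<in>M. e \<noteq> f \<longrightarrow> e \<inter> f = {})"

definition maximal_matching :: "'a set set \<Rightarrow> 'a set set \<Rightarrow> bool" where
  "maximal_matching E M \<longleftrightarrow> matching E M \<and> (\<forall>M'. matching E M' \<and> M \<subseteq> M' \<longrightarrow> M' = M)"

definition equimatchable :: "'a set set \<Rightarrow> bool" where
  "equimatchable E \<longleftrightarrow>
     (\<forall>M M'. maximal_matching E M \<and> maximal_matching E M' \<longrightarrow> card M = card M')"

definition covers :: "'a set set \<Rightarrow> 'a \<Rightarrow> bool" where
  "covers M v \<longleftrightarrow> (\<exists>e\<in>M. v \<in> e)"

definition strong_vertex :: "'a set set \<Rightarrow> 'a \<Rightarrow> bool" where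
  "strong_vertex E v \<longleftrightarrow> (\<forall>M. maximal_matching E M \<longrightarrow> covers M v)"

end

theory Submission
  imports Defs
begin

lemma edge_form: "graph V E \<Longrightarrow> e \<in> E \<Longrightarrow> \<exists>x y. e = {x,y} \<and> x \<noteq> y \<and> x \<in> V \<and> y \<in> V"
  unfolding graph_def by blast

lemma finite_E: "graph V E \<Longrightarrow> finite E"
proof -
  assume g: "graph V E"
  have "E \<subseteq> Pow V" using edge_form[OF g] by blast
  moreover have "finite V" using g graph_def by blast
  ultimately show ?thesis using finite_subset by blast
qed

lemma edge_V: "graph V E \<Longrightarrow> {x,y} \<in> E \<Longrightarrow> x \<in> V \<and> y \<in> V \<and> x \<noteq> y"
proof -
  assume g: "graph V E" and e: "{x,y} \<in> E"
  obtain a b where "{x,y} = {a,b}" "a \<noteq> b" "a \<in> V" "b \<in> V" using edge_form[OF g e] by blast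
  then show ?thesis by (auto simp: doubleton_eq_iff)
qed

lemma matching_sub: "matching E M \<Longrightarrow> N \<subseteq> M \<Longrightarrow> matching E N"
  unfolding matching_def by blast

lemma matching_insert: "matching E M \<Longrightarrow> {x,y} \<in> E \<Longrightarrow> \<not> covers M x \<Longrightarrow> \<not> covers M y
  \<Longrightarrow> matching E (insert {x,y} M)"
proof -
  assume m: "matching E M" and e: "{x,y} \<in> E" and x: "\<not> covers M x" and y: "\<not> covers M y"
  have d: "{x,y} \<inter> f = {}" "f \<inter> {x,y} = {}" if "f \<in> M" for f using x y that by (auto simp: covers_def)
  show ?thesis using m e d unfolding matching_def by (metis insert_iff insert_subset)
qed

lemma covers_insert: "covers (insert {x,y} M) z \<longleftrightarrow> z = x \<or> z = y \<or> covers M z"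
  unfolding covers_def by auto

lemma covers_remove: "matching E M \<Longrightarrow> {a,b} \<in> M \<Longrightarrow>
   covers (M - {{a,b}}) z \<longleftrightarrow> covers M z \<and> z \<noteq> a \<and> z \<noteq> b"
proof -
  assume m: "matching E M" and ab: "{a,b} \<in> M"
  show ?thesis
  proof
    assume "covers (M - {{a,b}}) z"
    then obtain f where f: "f \<in> M" "f \<noteq> {a,b}" "z \<in> f" unfolding covers_def by auto
    then have "f \<inter> {a,b} = {}" using m ab unfolding matching_def by (simp add: Int_commute)
    then show "covers M z \<and> z \<noteq> a \<and> z \<noteq> b" using f unfolding covers_def by auto
  next
    assume a: "covers M z \<and> z \<noteq> a \<and> z \<noteq> b"
    then obtain f where f: "f \<in> M" "z \<in> f" unfolding covers_def by auto
    then have "f \<noteq> {a,b}" using a by auto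
    then show "covers (M - {{a,b}}) z" using f unfolding covers_def by auto
  qed
qed

lemma matching_E: "matching E M \<Longrightarrow> e \<in> M \<Longrightarrow> e \<in> E"
  by (auto simp: matching_def)

lemma matching_disj: "matching E M \<Longrightarrow> e \<in> M \<Longrightarrow> f \<in> M \<Longrightarrow> e \<noteq> f \<Longrightarrow> e \<inter> f = {}"
  by (simp add: matching_def)

lemma max_match: "maximal_matching E M \<Longrightarrow> matching E M"
  by (simp add: maximal_matching_def)

lemma max_eq: "maximal_matching E M \<Longrightarrow> matching E M' \<Longrightarrow> M \<subseteq> M' \<Longrightarrow> M' = M"
  by (simp add: maximal_matching_def)

lemma partner_unique: "matching E M \<Longrightarrow> {a,b} \<in> M \<Longrightarrow> {a,c} \<in> M \<Longrightarrow> b = c"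
proof (rule ccontr)
  assume m: "matching E M" and ab: "{a,b} \<in> M" and ac: "{a,c} \<in> M" and bc: "b \<noteq> c"
  then have "{a,b} \<noteq> {a,c}" by (auto simp: doubleton_eq_iff)
  then have "{a,b} \<inter> {a,c} = {}" using matching_disj[OF m ab ac] by blast
  then show False by blast
qed

lemma covers_partner: "matching E M \<Longrightarrow> graph V E \<Longrightarrow> covers M x \<Longrightarrow> \<exists>y. {x,y} \<in> M \<and> x \<noteq> y"
proof -
  assume m: "matching E M" and g: "graph V E" and c: "covers M x"
  then obtain e where e: "e \<in> M" "x \<in> e" unfolding covers_def by blast
  have "e \<in> E" using matching_E[OF m e(1)] .
  then obtain a b where "e = {a,b}" "a \<noteq> b" using edge_form[OF g] by blast
  then show ?thesis using e by (metis empty_iff insert_commute insert_iff)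
qed

lemma not_covers_edge: "\<not> covers M x \<Longrightarrow> {x,y} \<notin> M"
  unfolding covers_def by blast

locale eqm =
  fixes V :: "'a set" and E :: "'a set set" and U W :: "'a set"
  assumes G: "graph V E" and B: "independent_bipartition V E U W" and EQ: "equimatchable E"
begin

lemma finE: "finite E" using finite_E[OF G] .

lemma fin_match: "matching E M \<Longrightarrow> finite M"
proof -
  assume m: "matching E M"
  have "M \<subseteq> E" using matching_E[OF m] by blast
  then show ?thesis using finE finite_subset by blast
qed

lemma sideU: "{x,y} \<in> E \<Longrightarrow> x \<in> U \<Longrightarrow> y \<in> W"
proof -
  assume e: "{x,y} \<in> E" and x: "x \<in> U"
  have "y \<in> V" using edge_V[OF G e] by blast
  moreover have "y \<notin> U"
  proof
    assume "y \<in> U"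
    moreover have "independent_set E U" using B unfolding independent_bipartition_def by simp
    ultimately show False using e x unfolding independent_set_def adj_def by blast
  qed
  moreover have "U \<union> W = V" using B unfolding independent_bipartition_def by simp
  ultimately show ?thesis by blast
qed

lemma sideW: "{x,y} \<in> E \<Longrightarrow> x \<in> W \<Longrightarrow> y \<in> U"
proof -
  assume e: "{x,y} \<in> E" and x: "x \<in> W"
  have "y \<in> V" using edge_V[OF G e] by blast
  moreover have "y \<notin> W"
  proof
    assume "y \<in> W"
    moreover have "independent_set E W" using B unfolding independent_bipartition_def by simp
    ultimately show False using e x unfolding independent_set_def adj_def by blast
  qed
  moreover have "U \<union> W = V" using B unfolding independent_bipartition_def by simp
  ultimately show ?thesis by blast
qed

lemma disj: "x \<in> U \<Longrightarrow> x \<in> W \<Longrightarrow> False"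
proof -
  assume "x \<in> U" "x \<in> W"
  moreover have "U \<inter> W = {}" using B unfolding independent_bipartition_def by simp
  ultimately show False by blast
qed

lemma ext: "matching E N \<Longrightarrow> \<exists>M. maximal_matching E M \<and> N \<subseteq> M"
proof -
  assume n: "matching E N"
  let ?P = "\<lambda>M. matching E M \<and> N \<subseteq> M"
  have "\<forall>y. ?P y \<longrightarrow> card y < Suc (card E)"
    using finE by (metis card_mono le_imp_less_Suc matching_def)
  then obtain M where M: "?P M" "\<forall>y. ?P y \<longrightarrow> card y \<le> card M"
    using Lattices_Big.ex_has_greatest_nat[of ?P N card "Suc (card E)"] n by blast
  have "maximal_matching E M"
    unfolding maximal_matching_def
  proof (intro conjI allI impI)
    show "matching E M" using M by blast
    fix M' assume a: "matching E M' \<and> M \<subseteq> M'"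
    then have "card M' \<le> card M" using M by blast
    then show "M' = M" using a fin_match card_seteq by blast
  qed
  then show ?thesis using M by blast
qed

definition nu where "nu = card (SOME M. maximal_matching E M)"

lemma max_card: "maximal_matching E M \<Longrightarrow> card M = nu"
proof -
  assume a: "maximal_matching E M"
  have "\<exists>M. maximal_matching E M" using ext[of "{}"] by (simp add: matching_def)
  then have "maximal_matching E (SOME M. maximal_matching E M)" by (rule someI_ex)
  then show ?thesis using a EQ unfolding nu_def equimatchable_def by blast
qed

lemma le_nu: "matching E N \<Longrightarrow> card N \<le> nu"
  by (metis card_mono ext fin_match max_card maximal_matching_def)

lemma eq_nu: "matching E N \<Longrightarrow> card N = nu \<Longrightarrow> maximal_matching E N"
  unfolding maximal_matching_def
  by (metis card_seteq fin_match le_nu)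

lemma lt_nu: "matching E N \<Longrightarrow> card N < nu \<Longrightarrow>
   \<exists>x y. {x,y} \<in> E \<and> \<not> covers N x \<and> \<not> covers N y \<and> x \<noteq> y"
proof -
  assume n: "matching E N" and c: "card N < nu"
  obtain M where M: "maximal_matching E M" "N \<subseteq> M" using ext[OF n] by blast
  then have "M \<noteq> N" using c max_card by force
  then obtain e where e: "e \<in> M" "e \<notin> N" using M by blast
  have mM: "matching E M" using max_match[OF M(1)] .
  have "e \<in> E" using matching_E[OF mM e(1)] .
  then obtain x y where xy: "e = {x,y}" "x \<noteq> y" using edge_form[OF G] by blast
  have nc: "\<not> covers N z" if "z \<in> e" for z
  proof
    assume "covers N z" then obtain f where f: "f \<in> N" "z \<in> f" by (auto simp: covers_def)
    then have "f \<in> M" "f \<noteq> e" using M(2) e by auto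
    then have "e \<inter> f = {}" using matching_disj[OF mM e(1)] by blast
    then show False using that f by blast
  qed
  have "\<not> covers N x" "\<not> covers N y" using nc xy by auto
  then show ?thesis using xy \<open>e \<in> E\<close> by blast
qed

lemma maximal_free: "maximal_matching E M \<Longrightarrow> {x,y} \<in> E \<Longrightarrow> \<not> covers M x \<Longrightarrow> \<not> covers M y \<Longrightarrow> False"
proof -
  assume M: "maximal_matching E M" and e: "{x,y} \<in> E" and x: "\<not> covers M x" and y: "\<not> covers M y"
  have "matching E (insert {x,y} M)" using matching_insert[OF max_match[OF M] e x y] .
  then have "insert {x,y} M = M" using max_eq[OF M] by blast
  then have "{x,y} \<in> M" by (metis insertI1)
  then show False using not_covers_edge[OF x] by simp
qed

lemma card_remove_insert:
  assumes m: "matching E M" and ab: "{a,b} \<in> M" and e: "{x,y} \<in> E"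
    and x: "\<not> covers (M - {{a,b}}) x" and y: "\<not> covers (M - {{a,b}}) y"
  shows "matching E (insert {x,y} (M - {{a,b}}))" "card (insert {x,y} (M - {{a,b}})) = card M"
proof -
  have m': "matching E (M - {{a,b}})" using matching_sub[OF m] by blast
  show "matching E (insert {x,y} (M - {{a,b}}))" using matching_insert[OF m' e x y] .
  have "{x,y} \<notin> M - {{a,b}}" using not_covers_edge[OF x] .
  moreover have "finite M" using fin_match[OF m] .
  ultimately show "card (insert {x,y} (M - {{a,b}})) = card M"
  proof -
    have "card M > 0" using ab \<open>finite M\<close> card_gt_0_iff by blast
    then show ?thesis using ab \<open>finite M\<close> \<open>{x,y} \<notin> M - {{a,b}}\<close> by simp
  qed
qed

lemma noA:
  "(adj E ^^ n) u w \<Longrightarrow> maximal_matching E M \<Longrightarrow> u \<in> U \<Longrightarrow> w \<in> W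
   \<Longrightarrow> \<not> covers M u \<Longrightarrow> \<not> covers M w \<Longrightarrow> False"
proof (induction n arbitrary: M u w rule: less_induct)
  case (less n M u w)
  note path = less.prems(1) and MM = less.prems(2) and uU = less.prems(3) and wW = less.prems(4)
    and fu = less.prems(5) and fw = less.prems(6)
  have Mm: "matching E M" using max_match[OF MM] .
  have finM: "finite M" using fin_match[OF Mm] .
  have cM: "card M = nu" using max_card[OF MM] .
  show False
  proof (cases n)
    case 0
    then have "u = w" using path by simp
    then show False using uU wW disj by blast
  next
    case (Suc m)
    have "(adj E ^^ Suc m) u w" using path Suc by (simp only:)
    from relpowp_Suc_D2[OF this] obtain p1 where up1: "adj E u p1" and p1w: "(adj E ^^ m) p1 w"
      by blast
    have e1: "{u,p1} \<in> E" using up1 by (simp add: adj_def)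
    have p1W: "p1 \<in> W" using sideU[OF e1 uU] .
    have cp1: "covers M p1" using maximal_free[OF MM e1 fu] by blast
    obtain q where q: "{p1,q} \<in> M" "p1 \<noteq> q" using covers_partner[OF Mm G cp1] by blast
    have qE: "{p1,q} \<in> E" using matching_E[OF Mm q(1)] .
    have qU: "q \<in> U" using sideW[OF qE p1W] .
    have cq: "covers M q" unfolding covers_def using q(1) by blast
    show False
    proof (cases m)
      case 0
      then have "p1 = w" using p1w by simp
      then show False using cp1 fw by blast
    next
      case (Suc k)
      have "(adj E ^^ Suc k) p1 w" using p1w Suc by (simp only:)
      from relpowp_Suc_D2[OF this] obtain p2 where p1p2: "adj E p1 p2" and p2w: "(adj E ^^ k) p2 w"
        by blast
      have e2: "{p1,p2} \<in> E" using p1p2 by (simp add: adj_def)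
      have p2U: "p2 \<in> U" using sideW[OF e2 p1W] .
      have kn: "k < n" using \<open>n = Suc m\<close> \<open>m = Suc k\<close> by simp
      note IH = less.IH[OF kn p2w]
      have cp2: "covers M p2" using IH[OF MM p2U wW _ fw] by blast
      obtain r where r: "{p2,r} \<in> M" "p2 \<noteq> r" using covers_partner[OF Mm G cp2] by blast
      have rE: "{p2,r} \<in> E" using matching_E[OF Mm r(1)] .
      have rW: "r \<in> W" using sideU[OF rE p2U] .
      have cr: "covers M r" unfolding covers_def using r(1) by blast
      have p2u: "p2 \<noteq> u" using cp2 fu by auto
      have wp1: "w \<noteq> p1" using cp1 fw by auto
      have wu: "w \<noteq> u" using uU wW disj by auto
      have p1p2ne: "p1 \<noteq> p2" using p1W p2U disj by auto
      have uq: "u \<noteq> q" using fu cq by auto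
      have ur: "u \<noteq> r" using uU rW disj by auto
      have wr: "w \<noteq> r" using fw cr by auto
      have wq: "w \<noteq> q" using wW qU disj by auto
      have p1q: "p1 \<noteq> q" using q(2) .
      have p2r: "p2 \<noteq> r" using r(2) .
      show False
      proof (cases "q = p2")
        case True
        define M' where "M' = insert {u,p1} (M - {{p1,q}})"
        have fu': "\<not> covers (M - {{p1,q}}) u" using fu by (simp add: covers_remove[OF Mm q(1)])
        have fp1': "\<not> covers (M - {{p1,q}}) p1" by (simp add: covers_remove[OF Mm q(1)])
        have M'm: "matching E M'" "card M' = nu"
          unfolding M'_def using card_remove_insert[OF Mm q(1) e1 fu' fp1'] cM by simp_all
        have M'M: "maximal_matching E M'" using eq_nu M'm by blast
        have fq: "\<not> covers (M - {{p1,q}}) q" by (simp add: covers_remove[OF Mm q(1)])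
        have "\<not> covers M' p2" using fq True p2u p1p2ne
          by (simp add: M'_def covers_insert)
        moreover have "\<not> covers M' w" using fw wu wp1
          by (simp add: M'_def covers_insert covers_remove[OF Mm q(1)])
        ultimately show False using IH[OF M'M p2U wW] by blast
      next
        case False
        have rp1: "r \<noteq> p1"
        proof
          assume "r = p1"
          then have "{p1,p2} \<in> M" using r(1) by (simp add: insert_commute)
          then show False using partner_unique[OF Mm q(1)] False by blast
        qed
        have edne: "{p1,q} \<noteq> {p2,r}" using p1p2ne rp1 by (auto simp: doubleton_eq_iff)
        define M0 where "M0 = M - {{p1,q}} - {{p2,r}}"
        have Mq: "matching E (M - {{p1,q}})" by (rule matching_sub[OF Mm]) blast
        have rq: "{p2,r} \<in> M - {{p1,q}}" using r(1) edne by blast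
        have M0m: "matching E M0" unfolding M0_def by (rule matching_sub[OF Mm]) blast
        have covM0: "covers M0 z \<longleftrightarrow> covers M z \<and> z \<noteq> p1 \<and> z \<noteq> q \<and> z \<noteq> p2 \<and> z \<noteq> r" for z
          unfolding M0_def covers_remove[OF Mq rq] covers_remove[OF Mm q(1)] by blast
        have cM0: "card M0 = nu - 2" unfolding M0_def using rq q(1) finM cM
          by (simp add: card_Diff_singleton)
        have nu2: "nu \<ge> 2"
        proof -
          have "{{p1,q},{p2,r}} \<subseteq> M" using q r by blast
          then have "card {{p1,q},{p2,r}} \<le> card M" using finM card_mono by blast
          then show ?thesis using edne cM by simp
        qed
        define M1 where "M1 = insert {p1,p2} M0"
        have fp1: "\<not> covers M0 p1" "\<not> covers M0 p2" using covM0 by auto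
        have M1m: "matching E M1" using matching_insert[OF M0m e2 fp1] M1_def by blast
        have "card M1 = Suc (card M0)" unfolding M1_def
          using not_covers_edge[OF fp1(1)] fin_match[OF M0m] by simp
        then have cM1: "card M1 < nu" using cM0 nu2 by simp
        obtain x y where xy: "{x,y} \<in> E" "\<not> covers M1 x" "\<not> covers M1 y" "x \<noteq> y"
          using lt_nu[OF M1m cM1] by blast
        have freeM1: "\<not> covers M1 z \<Longrightarrow> z = q \<or> z = r \<or> \<not> covers M z" for z
          unfolding M1_def covers_insert covM0 by blast
        have caseQ: False if zE: "{q,z} \<in> E" and fz: "\<not> covers M z" for z
        proof -
          have zW: "z \<in> W" using sideU[OF zE qU] .
          define N where "N = insert {q,z} (M - {{p1,q}})"
          have fq': "\<not> covers (M - {{p1,q}}) q" by (simp add: covers_remove[OF Mm q(1)])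
          have fz': "\<not> covers (M - {{p1,q}}) z" using fz by (simp add: covers_remove[OF Mm q(1)])
          have Nm: "matching E N" "card N = nu"
            unfolding N_def using card_remove_insert[OF Mm q(1) zE fq' fz'] cM by simp_all
          have uz: "u \<noteq> z" using uU zW disj by auto
          have p1z: "p1 \<noteq> z" using cp1 fz by auto
          have fuN: "\<not> covers N u" using fu uq uz
            by (simp add: N_def covers_insert covers_remove[OF Mm q(1)])
          have fp1N: "\<not> covers N p1" using p1q p1z
            by (simp add: N_def covers_insert covers_remove[OF Mm q(1)])
          have "matching E (insert {u,p1} N)" using matching_insert[OF Nm(1) e1 fuN fp1N] .
          moreover have "card (insert {u,p1} N) = Suc nu"
            using not_covers_edge[OF fuN] fin_match[OF Nm(1)] Nm(2) by simp
          ultimately show False using le_nu by fastforce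
        qed
        have caseR: False if zE: "{r,z} \<in> E" and fz: "\<not> covers M z" for z
        proof -
          have zU: "z \<in> U" using sideW[OF zE rW] .
          define N where "N = insert {r,z} (M - {{p2,r}})"
          have fr': "\<not> covers (M - {{p2,r}}) r" by (simp add: covers_remove[OF Mm r(1)])
          have fz': "\<not> covers (M - {{p2,r}}) z" using fz by (simp add: covers_remove[OF Mm r(1)])
          have Nm: "matching E N" "card N = nu"
            unfolding N_def using card_remove_insert[OF Mm r(1) zE fr' fz'] cM by simp_all
          have NM: "maximal_matching E N" using eq_nu Nm by blast
          have p2z: "p2 \<noteq> z" using cp2 fz by auto
          have wz: "w \<noteq> z" using wW zU disj by auto
          have "\<not> covers N p2" using p2r p2z
            by (simp add: N_def covers_insert covers_remove[OF Mm r(1)])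
          moreover have "\<not> covers N w" using fw wr wz
            by (simp add: N_def covers_insert covers_remove[OF Mm r(1)])
          ultimately show False using IH[OF NM p2U wW] by blast
        qed
        have caseQR: False if qrE: "{q,r} \<in> E"
        proof -
          have fq0: "\<not> covers M0 q" "\<not> covers M0 r" using covM0 by auto
          define N0 where "N0 = insert {q,r} M0"
          have N0m: "matching E N0" using matching_insert[OF M0m qrE fq0] N0_def by blast
          have cN0: "card N0 = nu - 1" unfolding N0_def
            using not_covers_edge[OF fq0(1)] fin_match[OF M0m] cM0 nu2 by simp
          have fuN: "\<not> covers N0 u" using fu uq ur
            by (simp add: N0_def covers_insert covM0)
          have fp1N: "\<not> covers N0 p1" using p1q rp1
            by (simp add: N0_def covers_insert covM0)
          define N where "N = insert {u,p1} N0"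
          have Nm: "matching E N" using matching_insert[OF N0m e1 fuN fp1N] N_def by blast
          have "card N = nu" unfolding N_def
            using not_covers_edge[OF fuN] fin_match[OF N0m] cN0 nu2 by simp
          then have NM: "maximal_matching E N" using eq_nu Nm by blast
          have "\<not> covers N p2" using p2u p1p2ne False p2r
            by (simp add: N_def N0_def covers_insert covM0)
          moreover have "\<not> covers N w" using fw wu wp1 wq wr
            by (simp add: N_def N0_def covers_insert covM0)
          ultimately show False using IH[OF NM p2U wW] by blast
        qed
        have fx: "x = q \<or> x = r \<or> \<not> covers M x" using freeM1 xy(2) .
        have fy: "y = q \<or> y = r \<or> \<not> covers M y" using freeM1 xy(3) .
        have yx: "{y,x} \<in> E" using xy(1) by (simp add: insert_commute)
        show False
          using fx fy xy(1) yx xy(4) caseQ caseR caseQR maximal_free[OF MM]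
          by (metis insert_commute)
      qed
    qed
  qed
qed

lemma noB:
  assumes C: "connected_graph V E"
  shows "card (M1 - M2) = k \<Longrightarrow> maximal_matching E M1 \<Longrightarrow> maximal_matching E M2 \<Longrightarrow> u \<in> U \<Longrightarrow> w \<in> W
   \<Longrightarrow> \<not> covers M1 u \<Longrightarrow> \<not> covers M2 w \<Longrightarrow> False"
proof (induction k arbitrary: M2 w rule: less_induct)
  case (less k M2 w)
  note kk = less.prems(1) and M1M = less.prems(2) and M2M = less.prems(3) and uU = less.prems(4)
    and wW = less.prems(5) and fu = less.prems(6) and fw = less.prems(7)
  have M1m: "matching E M1" using max_match[OF M1M] .
  have M2m: "matching E M2" using max_match[OF M2M] .
  show False
  proof (cases "covers M1 w")
    case False
    have UV: "U \<union> W = V" using B unfolding independent_bipartition_def by simp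
    have "u \<in> V" "w \<in> V" using uU wW UV by auto
    then have "(adj E)\<^sup>*\<^sup>* u w" using C unfolding connected_graph_def by simp
    then obtain n where "(adj E ^^ n) u w" unfolding rtranclp_power by blast
    then show False using noA[OF _ M1M uU wW fu False] by blast
  next
    case True
    obtain a where a: "{w,a} \<in> M1" "w \<noteq> a" using covers_partner[OF M1m G True] by blast
    have aE: "{w,a} \<in> E" using matching_E[OF M1m a(1)] .
    have aU: "a \<in> U" using sideW[OF aE wW] .
    have ca: "covers M2 a" using maximal_free[OF M2M aE fw] by blast
    obtain c where c: "{a,c} \<in> M2" "a \<noteq> c" using covers_partner[OF M2m G ca] by blast
    have cE: "{a,c} \<in> E" using matching_E[OF M2m c(1)] .
    have cW: "c \<in> W" using sideU[OF cE aU] .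
    have cc: "covers M2 c" unfolding covers_def using c(1) by blast
    have cw: "c \<noteq> w" using cc fw by auto
    define N where "N = insert {w,a} (M2 - {{a,c}})"
    have fw': "\<not> covers (M2 - {{a,c}}) w" using fw by (simp add: covers_remove[OF M2m c(1)])
    have fa': "\<not> covers (M2 - {{a,c}}) a" by (simp add: covers_remove[OF M2m c(1)])
    have Nm: "matching E N" "card N = nu"
      unfolding N_def using card_remove_insert[OF M2m c(1) aE fw' fa'] max_card[OF M2M] by simp_all
    have NM: "maximal_matching E N" using eq_nu Nm by blast
    have fc: "\<not> covers N c" using cw c(2)
      by (simp add: N_def covers_insert covers_remove[OF M2m c(1)])
    have acM1: "{a,c} \<notin> M1"
    proof
      assume "{a,c} \<in> M1"
      moreover have "{a,w} \<in> M1" using a(1) by (simp add: insert_commute)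
      ultimately have "c = w" by (rule partner_unique[OF M1m])
      then show False using cw by simp
    qed
    have sub: "M1 - N \<subseteq> (M1 - M2) - {{w,a}}" unfolding N_def using acM1 by blast
    have inn: "{w,a} \<in> M1 - M2" using a(1) not_covers_edge[OF fw] by blast
    have "M1 - N \<subset> M1 - M2" using sub inn by blast
    moreover have "finite (M1 - M2)" using fin_match[OF M1m] by simp
    ultimately have "card (M1 - N) < k" using kk psubset_card_mono by metis
    then show False using less.IH[OF _ refl M1M NM uU cW fu fc] by blast
  qed
qed

end

lemma ib_sym: "independent_bipartition V E U W \<Longrightarrow> independent_bipartition V E W U"
  unfolding independent_bipartition_def by blast

theorem mainTheorem13:
  fixes V :: "'a set" and E :: "'a set set"
  assumes "graph V E" and "connected_graph V E" and "bipartite V E"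
  shows "equimatchable E \<longleftrightarrow>
           (\<exists>U W. independent_bipartition V E U W \<and> (\<forall>u\<in>U. strong_vertex E u))"
proof
  assume EQ: "equimatchable E"
  obtain U0 W0 where B: "independent_bipartition V E U0 W0" using assms(3) unfolding bipartite_def by blast
  interpret eqm V E U0 W0 using assms(1) B EQ by (unfold_locales)
  show "\<exists>U W. independent_bipartition V E U W \<and> (\<forall>u\<in>U. strong_vertex E u)"
  proof (cases "\<forall>u\<in>U0. strong_vertex E u")
    case True then show ?thesis using B by blast
  next
    case F1: False
    show ?thesis
    proof (cases "\<forall>w\<in>W0. strong_vertex E w")
      case True then show ?thesis using ib_sym[OF B] by blast
    next
      case False
      obtain u M1 where "u \<in> U0" "maximal_matching E M1" "\<not> covers M1 u"
        using F1 unfolding strong_vertex_def by blast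
      moreover obtain w M2 where "w \<in> W0" "maximal_matching E M2" "\<not> covers M2 w"
        using False unfolding strong_vertex_def by blast
      ultimately show ?thesis using noB[OF assms(2) refl] by blast
    qed
  qed
next
  assume "\<exists>U W. independent_bipartition V E U W \<and> (\<forall>u\<in>U. strong_vertex E u)"
  then obtain U W where B: "independent_bipartition V E U W" and S: "\<forall>u\<in>U. strong_vertex E u" by blast
  have key: "card M = card U" if MM: "maximal_matching E M" for M
  proof -
    have Mm: "matching E M" using max_match[OF MM] .
    have one: "\<exists>z. e \<inter> U = {z}" if e: "e \<in> M" for e
    proof -
      have "e \<in> E" using matching_E[OF Mm e] .
      then obtain x y where xy: "e = {x,y}" "x \<noteq> y" "x \<in> V" "y \<in> V" using edge_form[OF assms(1)] by blast
      have ad: "adj E x y" using \<open>e \<in> E\<close> xy by (simp add: adj_def)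
      have UV: "U \<union> W = V" "independent_set E U" "independent_set E W"
        using B unfolding independent_bipartition_def by auto
      show ?thesis
      proof (cases "x \<in> U")
        case True
        then have "y \<notin> U" using ad UV(2) unfolding independent_set_def by blast
        then have "e \<inter> U = {x}" using True xy(1) by blast
        then show ?thesis by blast
      next
        case False
        then have "x \<in> W" using xy(3) UV(1) by blast
        then have "y \<notin> W" using ad UV(3) unfolding independent_set_def by blast
        then have "y \<in> U" using xy(4) UV(1) by blast
        then have "e \<inter> U = {y}" using False xy(1) by blast
        then show ?thesis by blast
      qed
    qed
    define h where "h e = (SOME z. z \<in> e \<inter> U)" for e
    have hU: "e \<inter> U = {h e}" if eM: "e \<in> M" for e
    proof -
      obtain z where z: "e \<inter> U = {z}" using one[OF eM] by blast
      then have "\<exists>z. z \<in> e \<inter> U" by blast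
      then have "h e \<in> e \<inter> U" unfolding h_def by (rule someI_ex)
      then show ?thesis using z by simp
    qed
    have inj: "inj_on h M"
    proof (rule inj_onI)
      fix e f assume ef: "e \<in> M" "f \<in> M" "h e = h f"
      then have "h e \<in> e \<inter> f" using hU by blast
      then show "e = f" using matching_disj[OF Mm ef(1,2)] by blast
    qed
    have img: "h ` M = U"
    proof
      show "h ` M \<subseteq> U" using hU by blast
      show "U \<subseteq> h ` M"
      proof
        fix u assume "u \<in> U"
        then have "covers M u" using S MM unfolding strong_vertex_def by blast
        then obtain e where "e \<in> M" "u \<in> e" unfolding covers_def by blast
        then have "u \<in> e \<inter> U" using \<open>u \<in> U\<close> by blast
        then have "h e = u" using hU[OF \<open>e \<in> M\<close>] by simp
        then show "u \<in> h ` M" using \<open>e \<in> M\<close> by blast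
      qed
    qed
    show ?thesis using card_image[OF inj] img by simp
  qed
  show "equimatchable E" unfolding equimatchable_def using key by simp
qed

end
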